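(* Let $P,Q,R_0,R_1$ be integers with $PQ\ne0$, $\Delta:=P^2-4Q\neq0$, $|R_0|+|R_1|>0$, $\gcd(P,Q)=\gcd(R_1,Q)=1$, such that $\alpha/\beta$ is not a root of unity, where $\alpha,\beta$ are the roots of $x^2-Px+Q$. Let $R_{n+2}=PR_{n+1}-QR_n$ ($n\ge0$) and $U_n=(\alpha^n-\beta^n)/(\alpha-\beta)$. Let $n,k$ be positive integers with $n\ge k$ and $n\ge2$, and suppose $R_k,R_{k+1},\dots,R_n$ are all nonzero. If $R_0\ne0$, then \[\frac{R_0^{\,n-k}}{R_kR_{k+1}\cdots R_n}=\sum_{j=k}^{n}\frac{(-1)^{n-j}U_j^{\,n-k}}{Q^{f(j,k,n)}[j-k]_{\boldsymbol U}!\,[n-j]_{\boldsymbol U}!}\cdot\frac1{R_j}.\] If $R_1\ne0$, then \[\frac{R_1^{\,n-k}}{R_kR_{k+1}\cdots R_n}=\sum_{j=k}^{n}\frac{(-1)^{n-j}U_{j-1}^{\,n-k}}{Q^{f(j,k,n)-(n-k)}[j-k]_{\boldsymbol U}!\,[n-j]_{\boldsymbol U}!}\cdot\frac1{R_j}.\]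
   Context: $U_0=0,U_1=1,U_{n+2}=PU_{n+1}-QU_n$; $[j]_{\boldsymbol U}!:=U_1\cdots U_j$ with $[0]_{\boldsymbol U}!=1$. For $k\le j\le n$, $f(j,k,n):=\sum_{k\le i\le n,\ i\ne j}\min(i,j)$. *)

theory Defs
  imports Complex_Main
begin

fun lseq :: "int \<Rightarrow> int \<Rightarrow> int \<Rightarrow> int \<Rightarrow> nat \<Rightarrow> int" where
  "lseq P Q a b 0 = a"
| "lseq P Q a b (Suc 0) = b"
| "lseq P Q a b (Suc (Suc n)) = P * lseq P Q a b (Suc n) - Q * lseq P Q a b n"

definition U :: "int \<Rightarrow> int \<Rightarrow> nat \<Rightarrow> int" where
  "U P Q n = lseq P Q 0 1 n"

definition Ufact :: "int \<Rightarrow> int \<Rightarrow> nat \<Rightarrow> int" where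
  "Ufact P Q j = (\<Prod>i=1..j. U P Q i)"

definition fjkn :: "nat \<Rightarrow> nat \<Rightarrow> nat \<Rightarrow> nat" where
  "fjkn j k n = (\<Sum>i\<in>{k..n} - {j}. min i j)"

end

theory Submission imports Defs "HOL-Computational_Algebra.Polynomial" begin

lemma lagrange_aux:
  fixes a b :: "nat \<Rightarrow> real" and S :: "nat set"
  assumes fin: "finite S" and ne: "S \<noteq> {}" and anz: "\<forall>i\<in>S. a i \<noteq> 0"
    and dist: "\<forall>i\<in>S. \<forall>j\<in>S. i \<noteq> j \<longrightarrow> a i * b j \<noteq> a j * b i"
    and r: "r \<le> card S - 1"
  shows "(\<Sum>j\<in>S. a j ^ (card S - 1 - r) * b j ^ r / (\<Prod>i\<in>S-{j}. a i * b j - a j * b i)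
            * (\<Prod>i\<in>S-{j}. a i * t - b i)) = t ^ r \<and>
         (r = card S - 1 \<longrightarrow> (\<Sum>j\<in>S. a j ^ (card S - 1 - r) * b j ^ r / (\<Prod>i\<in>S-{j}. a i * b j - a j * b i)
            * (\<Prod>i\<in>S-{j}. a i)) = 1)"
proof -
  define m where "m = card S - 1"
  have cS: "card S = Suc m" using fin ne m_def by (simp add: card_gt_0_iff Suc_diff_1)
  define w where "w j = a j ^ (m - r) * b j ^ r / (\<Prod>i\<in>S-{j}. a i * b j - a j * b i)" for j
  define p where "p = (\<Sum>j\<in>S. smult (w j) (\<Prod>i\<in>S-{j}. [:- b i, a i:]))"
  have polyp: "poly p x = (\<Sum>j\<in>S. w j * (\<Prod>i\<in>S-{j}. a i * x - b i))" for x
    unfolding p_def by (simp add: poly_sum poly_prod algebra_simps)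
  have degp: "degree p \<le> m"
    unfolding p_def
  proof (rule degree_sum_le[OF fin])
    fix j assume j: "j \<in> S"
    have "degree (smult (w j) (\<Prod>i\<in>S-{j}. [:- b i, a i:])) \<le> degree (\<Prod>i\<in>S-{j}. [:- b i, a i:])"
      by (rule degree_smult_le)
    also have "\<dots> \<le> sum (degree \<circ> (\<lambda>i. [:- b i, a i:])) (S-{j})"
      by (rule degree_prod_sum_le) (use fin in auto)
    also have "\<dots> \<le> sum (\<lambda>i. 1) (S-{j})"
      by (rule sum_mono) auto
    also have "\<dots> = m" using j fin cS by simp
    finally show "degree (smult (w j) (\<Prod>i\<in>S-{j}. [:- b i, a i:])) \<le> m" .
  qed
  define A where "A = (\<lambda>l. b l / a l) ` S"
  have inj: "inj_on (\<lambda>l. b l / a l) S"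
  proof (rule inj_onI)
    fix x y assume "x \<in> S" "y \<in> S" "b x / a x = b y / a y"
    then show "x = y" using dist anz by (metis divide_eq_eq frac_eq_eq mult.commute)
  qed
  have cA: "card A = Suc m" using card_image[OF inj] cS A_def by simp
  have vals: "poly p x = poly (monom 1 r) x" if "x \<in> A" for x
  proof -
    from that obtain l where l: "l \<in> S" and x: "x = b l / a l" unfolding A_def by auto
    have z: "w j * (\<Prod>i\<in>S-{j}. a i * x - b i) = 0" if "j \<in> S" "j \<noteq> l" for j
    proof -
      have "(\<Prod>i\<in>S-{j}. a i * x - b i) = 0"
        using fin l that x anz by (intro prod_zero bexI[of _ l]) auto
      then show ?thesis by simp
    qed
    have "poly p x = w l * (\<Prod>i\<in>S-{l}. a i * x - b i)"
      unfolding polyp using z l fin by (subst sum.remove[of _ l]) (auto intro!: sum.neutral simp del: mult_eq_0_iff)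
    also have "(\<Prod>i\<in>S-{l}. a i * x - b i) = (\<Prod>i\<in>S-{l}. (a i * b l - a l * b i) / a l)"
      using anz l x by (intro prod.cong) (auto simp: field_simps)
    also have "\<dots> = (\<Prod>i\<in>S-{l}. a i * b l - a l * b i) / a l ^ m"
      using fin l cS by (simp add: prod_dividef)
    also have "w l * \<dots> = a l ^ (m - r) * b l ^ r / a l ^ m"
    proof -
      have "(\<Prod>i\<in>S-{l}. a i * b l - a l * b i) \<noteq> 0"
        using fin dist l by (auto simp: prod_zero_iff)
      then show ?thesis unfolding w_def by (simp add: field_simps)
    qed
    also have "\<dots> = x ^ r"
    proof -
      have "a l ^ m = a l ^ (m - r) * a l ^ r" proof -
        have "m = (m - r) + r" using r m_def by simp
        then show ?thesis by (metis power_add)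
      qed
      then show ?thesis using anz l x by (simp add: power_divide)
    qed
    finally show ?thesis by (simp add: poly_monom)
  qed
  have pm: "p = monom 1 r"
    by (rule poly_eqI_degree[OF vals]) (use degp cA r m_def in \<open>auto simp: degree_monom_eq\<close>)
  then have "poly p t = t ^ r" by (simp add: poly_monom)
  then have A1: "(\<Sum>j\<in>S. a j ^ (card S - 1 - r) * b j ^ r / (\<Prod>i\<in>S-{j}. a i * b j - a j * b i)
            * (\<Prod>i\<in>S-{j}. a i * t - b i)) = t ^ r" unfolding polyp w_def m_def by simp
  have lc: "coeff (\<Prod>i\<in>S-{j}. [:- b i, a i:]) m = (\<Prod>i\<in>S-{j}. a i)" if j: "j \<in> S" for j
  proof -
    have "degree (\<Prod>i\<in>S-{j}. [:- b i, a i:]) = (\<Sum>i\<in>S-{j}. degree [:- b i, a i:])"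
      by (rule degree_prod_eq_sum_degree) (use anz in auto)
    also have "\<dots> = (\<Sum>i\<in>S-{j}. 1)" using anz by (intro sum.cong) auto
    also have "\<dots> = m" using j fin cS by simp
    finally have "degree (\<Prod>i\<in>S-{j}. [:- b i, a i:]) = m" .
    then have "coeff (\<Prod>i\<in>S-{j}. [:- b i, a i:]) m = lead_coeff (\<Prod>i\<in>S-{j}. [:- b i, a i:])" by simp
    also have "\<dots> = (\<Prod>i\<in>S-{j}. a i)" using anz j by (subst lead_coeff_prod) (intro prod.cong; auto)
    finally show ?thesis .
  qed
  have A2: "(\<Sum>j\<in>S. a j ^ (card S - 1 - r) * b j ^ r / (\<Prod>i\<in>S-{j}. a i * b j - a j * b i)
            * (\<Prod>i\<in>S-{j}. a i)) = 1" if rm: "r = card S - 1"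
  proof -
    have "coeff p m = 1" using pm rm m_def by (simp add: coeff_monom)
    moreover have "coeff p m = (\<Sum>j\<in>S. w j * (\<Prod>i\<in>S-{j}. a i))"
      unfolding p_def coeff_sum coeff_smult using lc by (intro sum.cong) auto
    ultimately show ?thesis unfolding w_def m_def by simp
  qed
  show ?thesis using A1 A2 by blast
qed


lemma U_0[simp]: "U P Q 0 = 0" and U_1[simp]: "U P Q (Suc 0) = 1"
  and U_SS: "U P Q (Suc (Suc n)) = P * U P Q (Suc n) - Q * U P Q n"
  by (simp_all add: U_def)

lemma U_doc: "U P Q (Suc j + d) * U P Q j - U P Q (j + d) * U P Q (Suc j) = - (Q ^ j * U P Q d)"
proof (induction j)
  case 0 then show ?case by simp
next
  case (Suc j)
  have e1: "U P Q (Suc (Suc j) + d) = P * U P Q (Suc j + d) - Q * U P Q (j + d)"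
    using U_SS[of P Q "j + d"] by simp
  have e2: "U P Q (Suc (Suc j)) = P * U P Q (Suc j) - Q * U P Q j" by (rule U_SS)
  have "U P Q (Suc (Suc j) + d) * U P Q (Suc j) - U P Q (Suc j + d) * U P Q (Suc (Suc j))
      = Q * (U P Q (Suc j + d) * U P Q j - U P Q (j + d) * U P Q (Suc j))"
    unfolding e1 e2 by (simp add: algebra_simps)
  also have "\<dots> = - (Q ^ Suc j * U P Q d)" using Suc by simp
  finally show ?case by simp
qed

lemma lseq_U: "lseq P Q R0 R1 (Suc n) = R1 * U P Q (Suc n) - Q * R0 * U P Q n"
proof -
  have "lseq P Q R0 R1 (Suc n) = R1 * U P Q (Suc n) - Q * R0 * U P Q n \<and>
        lseq P Q R0 R1 (Suc (Suc n)) = R1 * U P Q (Suc (Suc n)) - Q * R0 * U P Q (Suc n)"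
  proof (induction n)
    case 0 then show ?case by (simp add: U_SS)
  next
    case (Suc n)
    then have h1: "lseq P Q R0 R1 (Suc n) = R1 * U P Q (Suc n) - Q * R0 * U P Q n"
      and h2: "lseq P Q R0 R1 (Suc (Suc n)) = R1 * U P Q (Suc (Suc n)) - Q * R0 * U P Q (Suc n)" by blast+
    have "lseq P Q R0 R1 (Suc (Suc (Suc n))) = P * lseq P Q R0 R1 (Suc (Suc n)) - Q * lseq P Q R0 R1 (Suc n)" by simp
    also have "\<dots> = P * (R1 * U P Q (Suc (Suc n)) - Q * R0 * U P Q (Suc n)) - Q * (R1 * U P Q (Suc n) - Q * R0 * U P Q n)"
      by (simp only: h1 h2)
    also have "\<dots> = R1 * U P Q (Suc (Suc (Suc n))) - Q * R0 * U P Q (Suc (Suc n))"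
      by (simp only: U_SS[of P Q "Suc n"] U_SS[of P Q n]) (simp add: algebra_simps)
    finally show ?case using h2 by blast
  qed
  then show ?thesis by blast
qed

lemma U_binet:
  fixes \<alpha> \<beta> :: complex
  assumes "\<alpha> + \<beta> = of_int P" "\<alpha> * \<beta> = of_int Q"
  shows "of_int (U P Q n) * (\<alpha> - \<beta>) = \<alpha> ^ n - \<beta> ^ n"
proof -
  have "of_int (U P Q n) * (\<alpha> - \<beta>) = \<alpha> ^ n - \<beta> ^ n \<and>
        of_int (U P Q (Suc n)) * (\<alpha> - \<beta>) = \<alpha> ^ Suc n - \<beta> ^ Suc n"
  proof (induction n)
    case 0 then show ?case by simp
  next
    case (Suc n)
    have "of_int (U P Q (Suc (Suc n))) * (\<alpha> - \<beta>)
        = of_int P * (of_int (U P Q (Suc n)) * (\<alpha> - \<beta>)) - of_int Q * (of_int (U P Q n) * (\<alpha> - \<beta>))"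
      by (simp add: U_SS algebra_simps)
    also have "\<dots> = (\<alpha> + \<beta>) * (\<alpha> ^ Suc n - \<beta> ^ Suc n) - (\<alpha> * \<beta>) * (\<alpha> ^ n - \<beta> ^ n)"
      using Suc assms by simp
    also have "\<dots> = \<alpha> ^ Suc (Suc n) - \<beta> ^ Suc (Suc n)" by (simp add: algebra_simps)
    finally show ?case using Suc by simp
  qed
  then show ?thesis by blast
qed

lemma U_nz:
  fixes \<alpha> \<beta> :: complex
  assumes "\<alpha> + \<beta> = of_int P" "\<alpha> * \<beta> = of_int Q" "Q \<noteq> 0" "P^2 - 4*Q \<noteq> 0"
    and nru: "\<not> (\<exists>m::nat. m > 0 \<and> (\<alpha> / \<beta>) ^ m = 1)" and i: "i \<ge> 1"
  shows "U P Q i \<noteq> 0"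
proof
  assume U0: "U P Q i = 0"
  have "(\<alpha> - \<beta>)^2 = (\<alpha> + \<beta>)^2 - 4 * (\<alpha> * \<beta>)" by (simp add: power2_eq_square algebra_simps)
  also have "\<dots> = of_int (P^2 - 4*Q)" using assms by simp
  also have "\<dots> \<noteq> 0" using assms(4) by (metis of_int_eq_0_iff)
  finally have ab: "\<alpha> \<noteq> \<beta>" by auto
  have b0: "\<beta> \<noteq> 0" using assms(2,3) by auto
  from U_binet[OF assms(1,2), of i] U0 have "\<alpha> ^ i = \<beta> ^ i" by simp
  then have "(\<alpha> / \<beta>) ^ i = 1" using b0 by (simp add: power_divide)
  moreover have "i > 0" using i by simp
  ultimately show False using nru by blast
qed


lemma U_doc_real:
  assumes "1 \<le> j" "j \<le> i"
  shows "real_of_int (U P Q i) * real_of_int (U P Q (j - 1)) - real_of_int (U P Q (i - 1)) * real_of_int (U P Q j)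
         = - (real_of_int Q ^ (j - 1) * real_of_int (U P Q (i - j)))"
proof -
  define j' where "j' = j - 1"
  define d where "d = i - j"
  have j: "j = Suc j'" and i: "i = Suc j' + d" using assms unfolding j'_def d_def by auto
  have "U P Q (Suc j' + d) * U P Q j' - U P Q (j' + d) * U P Q (Suc j') = - (Q ^ j' * U P Q d)"
    by (rule U_doc)
  then have "real_of_int (U P Q (Suc j' + d) * U P Q j' - U P Q (j' + d) * U P Q (Suc j')) = real_of_int (- (Q ^ j' * U P Q d))"
    by simp
  then show ?thesis unfolding i j by simp
qed

lemma reindex1:
  fixes g :: "nat \<Rightarrow> real"
  assumes "k \<le> j"
  shows "(\<Prod>i\<in>{k..<j}. g (j - i)) = (\<Prod>d=1..j-k. g d)"
  by (rule prod.reindex_bij_witness[where i="\<lambda>d. j - d" and j="\<lambda>i. j - i"]) (use assms in auto)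

lemma reindex2:
  fixes g :: "nat \<Rightarrow> real"
  shows "(\<Prod>i\<in>{j<..n}. g (i - j)) = (\<Prod>d=1..n-j. g d)"
  by (rule prod.reindex_bij_witness[where i="\<lambda>d. d + j" and j="\<lambda>i. i - j"]) auto

lemma neg1_inv: "1 / ((-1::real) ^ e) = (-1) ^ e"
  by (cases "even e") auto


theorem lemma5:
  fixes P Q R0 R1 :: int and \<alpha> \<beta> :: complex and n k :: nat
  assumes PQ: "P * Q \<noteq> 0"
    and disc: "P^2 - 4*Q \<noteq> 0"
    and R01: "\<bar>R0\<bar> + \<bar>R1\<bar> > 0"
    and g1: "gcd P Q = 1" and g2: "gcd R1 Q = 1"
    and roots: "\<alpha> + \<beta> = of_int P" "\<alpha> * \<beta> = of_int Q"
    and nru: "\<not> (\<exists>m::nat. m > 0 \<and> (\<alpha> / \<beta>) ^ m = 1)"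
    and k: "k \<ge> 1" and nk: "n \<ge> k" and n2: "n \<ge> 2"
    and Rnz: "\<forall>i\<in>{k..n}. lseq P Q R0 R1 i \<noteq> 0"
  shows "(R0 \<noteq> 0 \<longrightarrow>
           real_of_int R0 ^ (n - k) / (\<Prod>i=k..n. real_of_int (lseq P Q R0 R1 i)) =
           (\<Sum>j=k..n. (-1) ^ (n - j) * real_of_int (U P Q j) ^ (n - k) /
              (real_of_int Q ^ fjkn j k n * real_of_int (Ufact P Q (j - k)) * real_of_int (Ufact P Q (n - j)))
              * (1 / real_of_int (lseq P Q R0 R1 j))))
       \<and> (R1 \<noteq> 0 \<longrightarrow>
           real_of_int R1 ^ (n - k) / (\<Prod>i=k..n. real_of_int (lseq P Q R0 R1 i)) =
           (\<Sum>j=k..n. (-1) ^ (n - j) * real_of_int (U P Q (j - 1)) ^ (n - k) /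
              (real_of_int Q ^ (fjkn j k n - (n - k)) * real_of_int (Ufact P Q (j - k)) * real_of_int (Ufact P Q (n - j)))
              * (1 / real_of_int (lseq P Q R0 R1 j))))"
proof -
  define u where "u i = real_of_int (U P Q i)" for i
  define q where "q = real_of_int Q"
  define R where "R i = real_of_int (lseq P Q R0 R1 i)" for i
  define uf where "uf j = (\<Prod>d=1..j. u d)" for j
  define S where "S = {k..n}"
  define m where "m = n - k"
  define a where "a i = u i" for i
  define b where "b i = q * u (i - 1)" for i
  define D where "D j = (\<Prod>i\<in>S-{j}. a i * b j - a j * b i)" for j
  have Q0: "Q \<noteq> 0" using PQ by simp
  have q0: "q \<noteq> 0" using Q0 q_def by simp
  have unz: "u i \<noteq> 0" if "i \<ge> 1" for i
    using U_nz[OF roots Q0 disc nru that] u_def by simp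
  have finS: "finite S" and neS: "S \<noteq> {}" using nk S_def by auto
  have cS: "card S = Suc m" using nk S_def m_def by simp
  have Rlin: "R i = a i * real_of_int R1 - b i * real_of_int R0" if "i \<ge> 1" for i
  proof -
    have "lseq P Q R0 R1 (Suc (i - 1)) = R1 * U P Q (Suc (i - 1)) - Q * R0 * U P Q (i - 1)" by (rule lseq_U)
    then have "lseq P Q R0 R1 i = R1 * U P Q i - Q * R0 * U P Q (i - 1)" using that by simp
    then have "real_of_int (lseq P Q R0 R1 i) = real_of_int (R1 * U P Q i - Q * R0 * U P Q (i - 1))" by simp
    then show ?thesis unfolding R_def a_def b_def u_def q_def by (simp add: algebra_simps)
  qed
  have RnzS: "R i \<noteq> 0" if "i \<in> S" for i using Rnz that R_def S_def by simp
  have F: "a i * b j - a j * b i = (if j < i then - (q ^ j * u (i - j)) else q ^ i * u (j - i))"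
    if "i \<in> S" "j \<in> S" "i \<noteq> j" for i j
  proof (cases "j < i")
    case True
    have "a i * b j - a j * b i = q * (u i * u (j - 1) - u (i - 1) * u j)"
      unfolding a_def b_def by (simp add: algebra_simps)
    also have "\<dots> = q * (- (q ^ (j - 1) * u (i - j)))"
      using U_doc_real[of j i P Q] that True k S_def u_def q_def by simp
    also have "\<dots> = - (q ^ j * u (i - j))"
    proof -
      have "j = Suc (j - 1)" using that k S_def by auto
      then have "q ^ j = q * q ^ (j - 1)" by (metis power_Suc)
      then show ?thesis by simp
    qed
    finally show ?thesis using True by simp
  next
    case False
    then have ij: "i < j" using that by simp
    have "a i * b j - a j * b i = - q * (u j * u (i - 1) - u (j - 1) * u i)"
      unfolding a_def b_def by (simp add: algebra_simps)
    also have "\<dots> = - q * (- (q ^ (i - 1) * u (j - i)))"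
      using U_doc_real[of i j P Q] that ij k S_def u_def q_def by simp
    also have "\<dots> = q ^ i * u (j - i)"
    proof -
      have "i = Suc (i - 1)" using that k S_def by auto
      then have "q ^ i = q * q ^ (i - 1)" by (metis power_Suc)
      then show ?thesis by simp
    qed
    finally show ?thesis using False by simp
  qed
  have anz: "\<forall>i\<in>S. a i \<noteq> 0" using unz k S_def a_def by auto
  have dist: "\<forall>i\<in>S. \<forall>j\<in>S. i \<noteq> j \<longrightarrow> a i * b j \<noteq> a j * b i"
  proof (intro ballI impI)
    fix i j assume ij: "i \<in> S" "j \<in> S" "i \<noteq> j"
    have "a i * b j - a j * b i \<noteq> 0"
      using F[OF ij] q0 unz ij by auto
    then show "a i * b j \<noteq> a j * b i" by simp
  qed
  have fsplit: "fjkn j k n = (\<Sum>i\<in>{k..<j}. i) + j * (n - j)" if j: "j \<in> S" for j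
  proof -
    have "{k..n} - {j} = {k..<j} \<union> {j<..n}" using j S_def by auto
    then have "fjkn j k n = (\<Sum>i\<in>{k..<j} \<union> {j<..n}. min i j)" unfolding fjkn_def by simp
    also have "\<dots> = (\<Sum>i\<in>{k..<j}. min i j) + (\<Sum>i\<in>{j<..n}. min i j)"
      by (rule sum.union_disjoint) auto
    also have "(\<Sum>i\<in>{k..<j}. min i j) = (\<Sum>i\<in>{k..<j}. i)" by (intro sum.cong) auto
    also have "(\<Sum>i\<in>{j<..n}. min i j) = (\<Sum>i\<in>{j<..n}. j)" by (intro sum.cong) auto
    finally show ?thesis by simp
  qed
  have fge: "fjkn j k n \<ge> m" if j: "j \<in> S" for j
  proof -
    have "m = (\<Sum>i\<in>{k..n} - {j}. 1)" using j S_def cS finS by simp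
    also have "\<dots> \<le> fjkn j k n" unfolding fjkn_def using k j S_def by (intro sum_mono) auto
    finally show ?thesis .
  qed
  have Dval: "D j = (-1) ^ (n - j) * q ^ fjkn j k n * uf (j - k) * uf (n - j)" if j: "j \<in> S" for j
  proof -
    have "S - {j} = {k..<j} \<union> {j<..n}" using j S_def by auto
    then have "D j = (\<Prod>i\<in>{k..<j} \<union> {j<..n}. a i * b j - a j * b i)" unfolding D_def by simp
    also have "\<dots> = (\<Prod>i\<in>{k..<j}. a i * b j - a j * b i) * (\<Prod>i\<in>{j<..n}. a i * b j - a j * b i)"
      by (rule prod.union_disjoint) auto
    also have "(\<Prod>i\<in>{k..<j}. a i * b j - a j * b i) = (\<Prod>i\<in>{k..<j}. q ^ i * u (j - i))"
      using F j S_def by (intro prod.cong) auto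
    also have "\<dots> = (\<Prod>i\<in>{k..<j}. q ^ i) * uf (j - k)"
      using reindex1[where k=k and j=j and g=u] j S_def uf_def by (simp add: prod.distrib)
    also have "(\<Prod>i\<in>{j<..n}. a i * b j - a j * b i) = (\<Prod>i\<in>{j<..n}. (-1) * q ^ j * u (i - j))"
      using F j S_def by (intro prod.cong) auto
    also have "\<dots> = (-1) ^ (n - j) * (q ^ j) ^ (n - j) * uf (n - j)"
    proof -
      have "(\<Prod>i\<in>{j<..n}. (-1) * q ^ j * u (i - j)) = (\<Prod>i\<in>{j<..n}. (-1::real)) * (\<Prod>i\<in>{j<..n}. q ^ j) * (\<Prod>i\<in>{j<..n}. u (i - j))"
        by (simp only: prod.distrib)
      then show ?thesis using reindex2[where j=j and n=n and g=u] uf_def by simp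
    qed
    also have "q ^ fjkn j k n = (\<Prod>i\<in>{k..<j}. q ^ i) * (q ^ j) ^ (n - j)"
      using fsplit[OF j] by (simp add: power_add power_sum power_mult)
    ultimately show ?thesis by simp
  qed
  have Dnz: "D j \<noteq> 0" if "j \<in> S" for j
    using dist that finS unfolding D_def by (auto simp: prod_zero_iff)
  have key: "(\<Sum>j\<in>S. a j ^ (m - r) * b j ^ r / D j * (\<Prod>i\<in>S-{j}. R i))
             = real_of_int R0 ^ (m - r) * real_of_int R1 ^ r"
    if r: "r = 0 \<or> r = m" and h: "R0 \<noteq> 0 \<or> r = m" for r
  proof -
    have rle: "r \<le> card S - 1" using r cS by auto
    note L = lagrange_aux[OF finS neS anz dist rle]
    have cm: "card S - 1 - r = m - r" using cS by simp
    show ?thesis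
    proof (cases "R0 = 0")
      case False
      define t where "t = real_of_int R1 / real_of_int R0"
      have R0r: "real_of_int R0 \<noteq> 0" using False by simp
      have pr: "(\<Prod>i\<in>S-{j}. R i) = real_of_int R0 ^ m * (\<Prod>i\<in>S-{j}. a i * t - b i)" if j: "j \<in> S" for j
      proof -
        have "(\<Prod>i\<in>S-{j}. R i) = (\<Prod>i\<in>S-{j}. real_of_int R0 * (a i * t - b i))"
        proof (intro prod.cong refl)
          fix i assume "i \<in> S - {j}"
          then have "i \<ge> 1" using k S_def by auto
          then show "R i = real_of_int R0 * (a i * t - b i)" using Rlin[of i] R0r by (simp add: t_def field_simps) (metis distrib_left)
        qed
        also have "\<dots> = real_of_int R0 ^ card (S - {j}) * (\<Prod>i\<in>S-{j}. a i * t - b i)"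
          by (simp add: prod.distrib)
        also have "card (S - {j}) = m" using j finS cS by simp
        finally show ?thesis .
      qed
      have "(\<Sum>j\<in>S. a j ^ (m - r) * b j ^ r / D j * (\<Prod>i\<in>S-{j}. R i))
          = real_of_int R0 ^ m * (\<Sum>j\<in>S. a j ^ (m - r) * b j ^ r / D j * (\<Prod>i\<in>S-{j}. a i * t - b i))"
        by (simp add: sum_distrib_left pr) (intro sum.cong; simp add: pr)
      also have "(\<Sum>j\<in>S. a j ^ (m - r) * b j ^ r / D j * (\<Prod>i\<in>S-{j}. a i * t - b i)) = t ^ r"
        using conjunct1[OF L[of t]] unfolding cm D_def by simp
      also have "real_of_int R0 ^ m * t ^ r = real_of_int R0 ^ (m - r) * real_of_int R1 ^ r"
      proof -
        have "m = (m - r) + r" using r by auto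
        then have "real_of_int R0 ^ m = real_of_int R0 ^ (m - r) * real_of_int R0 ^ r" by (metis power_add)
        then show ?thesis using R0r by (simp add: t_def power_divide)
      qed
      finally show ?thesis .
    next
      case True
      then have rm: "r = m" using h by simp
      have pr: "(\<Prod>i\<in>S-{j}. R i) = real_of_int R1 ^ m * (\<Prod>i\<in>S-{j}. a i)" if j: "j \<in> S" for j
      proof -
        have "(\<Prod>i\<in>S-{j}. R i) = (\<Prod>i\<in>S-{j}. real_of_int R1 * a i)"
        proof (intro prod.cong refl)
          fix i assume "i \<in> S - {j}"
          then have "i \<ge> 1" using k S_def by auto
          then show "R i = real_of_int R1 * a i" using Rlin[of i] True by simp
        qed
        also have "\<dots> = real_of_int R1 ^ card (S - {j}) * (\<Prod>i\<in>S-{j}. a i)"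
          by (simp add: prod.distrib)
        also have "card (S - {j}) = m" using j finS cS by simp
        finally show ?thesis .
      qed
      have "(\<Sum>j\<in>S. a j ^ (m - r) * b j ^ r / D j * (\<Prod>i\<in>S-{j}. R i))
          = real_of_int R1 ^ m * (\<Sum>j\<in>S. a j ^ (m - r) * b j ^ r / D j * (\<Prod>i\<in>S-{j}. a i))"
        by (simp add: sum_distrib_left) (intro sum.cong; simp add: pr)
      also have "(\<Sum>j\<in>S. a j ^ (m - r) * b j ^ r / D j * (\<Prod>i\<in>S-{j}. a i)) = 1"
        using conjunct2[OF L[of 0]] rm cS unfolding cm D_def by simp
      finally show ?thesis using rm True by simp
    qed
  qed
  have divide: "(\<Sum>j\<in>S. c j * (\<Prod>i\<in>S-{j}. R i)) / (\<Prod>i\<in>S. R i) = (\<Sum>j\<in>S. c j * (1 / R j))" for c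
  proof -
    have "(\<Sum>j\<in>S. c j * (\<Prod>i\<in>S-{j}. R i)) / (\<Prod>i\<in>S. R i) = (\<Sum>j\<in>S. c j * (\<Prod>i\<in>S-{j}. R i) / (\<Prod>i\<in>S. R i))"
      by (simp add: sum_divide_distrib)
    also have "\<dots> = (\<Sum>j\<in>S. c j * (1 / R j))"
    proof (intro sum.cong refl)
      fix j assume j: "j \<in> S"
      have "(\<Prod>i\<in>S. R i) = R j * (\<Prod>i\<in>S-{j}. R i)" using j finS by (simp add: prod.remove)
      moreover have "(\<Prod>i\<in>S-{j}. R i) \<noteq> 0" using RnzS finS by (auto simp: prod_zero_iff)
      ultimately show "c j * (\<Prod>i\<in>S-{j}. R i) / (\<Prod>i\<in>S. R i) = c j * (1 / R j)"
        using RnzS[OF j] by (simp add: field_simps)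
    qed
    finally show ?thesis .
  qed
  have ufv: "real_of_int (Ufact P Q j) = uf j" for j unfolding Ufact_def uf_def u_def by simp
  have part1: "real_of_int R0 ^ (n - k) / (\<Prod>i=k..n. real_of_int (lseq P Q R0 R1 i)) =
           (\<Sum>j=k..n. (-1) ^ (n - j) * real_of_int (U P Q j) ^ (n - k) /
              (real_of_int Q ^ fjkn j k n * real_of_int (Ufact P Q (j - k)) * real_of_int (Ufact P Q (n - j)))
              * (1 / real_of_int (lseq P Q R0 R1 j)))" if R0nz: "R0 \<noteq> 0"
  proof -
    have "real_of_int R0 ^ (n - k) = (\<Sum>j\<in>S. a j ^ m / D j * (\<Prod>i\<in>S-{j}. R i))"
      using key[of 0] R0nz m_def by simp
    then have "real_of_int R0 ^ (n - k) / (\<Prod>i\<in>S. R i) = (\<Sum>j\<in>S. a j ^ m / D j * (1 / R j))"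
      using divide[of "\<lambda>j. a j ^ m / D j"] by simp
    also have "\<dots> = (\<Sum>j\<in>S. (-1) ^ (n - j) * u j ^ m / (q ^ fjkn j k n * uf (j - k) * uf (n - j)) * (1 / R j))"
    proof (intro sum.cong refl)
      fix j assume j: "j \<in> S"
      have "a j ^ m / D j = u j ^ m * (1 / (-1) ^ (n - j)) / (q ^ fjkn j k n * uf (j - k) * uf (n - j))"
        unfolding Dval[OF j] a_def by simp
      then show "a j ^ m / D j * (1 / R j) = (-1) ^ (n - j) * u j ^ m / (q ^ fjkn j k n * uf (j - k) * uf (n - j)) * (1 / R j)"
        by (simp only: neg1_inv) (simp add: mult.commute)
    qed
    finally show ?thesis unfolding S_def R_def u_def q_def m_def ufv .
  qed
  have part2: "real_of_int R1 ^ (n - k) / (\<Prod>i=k..n. real_of_int (lseq P Q R0 R1 i)) =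
           (\<Sum>j=k..n. (-1) ^ (n - j) * real_of_int (U P Q (j - 1)) ^ (n - k) /
              (real_of_int Q ^ (fjkn j k n - (n - k)) * real_of_int (Ufact P Q (j - k)) * real_of_int (Ufact P Q (n - j)))
              * (1 / real_of_int (lseq P Q R0 R1 j)))"
  proof -
    have "real_of_int R1 ^ (n - k) = (\<Sum>j\<in>S. b j ^ m / D j * (\<Prod>i\<in>S-{j}. R i))"
      using key[of m] m_def by simp
    then have "real_of_int R1 ^ (n - k) / (\<Prod>i\<in>S. R i) = (\<Sum>j\<in>S. b j ^ m / D j * (1 / R j))"
      using divide[of "\<lambda>j. b j ^ m / D j"] by simp
    also have "\<dots> = (\<Sum>j\<in>S. (-1) ^ (n - j) * u (j - 1) ^ m / (q ^ (fjkn j k n - m) * uf (j - k) * uf (n - j)) * (1 / R j))"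
    proof (intro sum.cong refl)
      fix j assume j: "j \<in> S"
      have qf: "q ^ fjkn j k n = q ^ (fjkn j k n - m) * q ^ m"
        using fge[OF j] by (simp flip: power_add)
      have "b j ^ m / D j = u (j - 1) ^ m * (1 / (-1) ^ (n - j)) / (q ^ (fjkn j k n - m) * uf (j - k) * uf (n - j))"
        unfolding Dval[OF j] b_def qf using q0 by (simp add: power_mult_distrib field_simps)
      then show "b j ^ m / D j * (1 / R j) = (-1) ^ (n - j) * u (j - 1) ^ m / (q ^ (fjkn j k n - m) * uf (j - k) * uf (n - j)) * (1 / R j)"
        by (simp only: neg1_inv) (simp add: mult.commute)
    qed
    finally show ?thesis unfolding S_def R_def u_def q_def m_def ufv .
  qed
  show ?thesis using part1 part2 by blast
qed

end
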